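(* Let $\tilde\partial$ be a quasi-elementary $M_{A,B}$-differential with associated sets $P,Q,R\subset B$ and $X,Y,Z\subset A\setminus B$. (a) If $q\in Q$, $r\in R$, $y\in Y$, $z\in Z$ satisfy $\tilde\partial(q)=r$ and $\tilde\partial_{A\setminus B}(y)=z$, then $\langle\tilde\partial(y),q\rangle=-\langle\tilde\partial(z),r\rangle$. (b) If $y\in Y$, $z\in Z$ satisfy $\tilde\partial_{A\setminus B}(y)=z$ and $b\in B$ appears in $\tilde\partial(z)$, then $b\in R$ and there exists $q\in Q$ with $\tilde\partial(q)=b$ such that $q$ appears in $\tilde\partial(y)$.
   Context: $\mathbb E$ a field; $A=\{a_1\prec\dots\prec a_N\}$ a finite linearly ordered graded set; $\mathbb E(A)$ the graded vector space with basis $A$; $\langle\cdot,\cdot\rangle$ the scalar product with $\langle a_i,a_j\rangle=\delta_{ij}$. An $M$-differential is a degree $-1$ map $\partial$ with $\partial^2=0$, $\partial(a_i)\in\mathrm{span}\{a_1,\dots,a_{i-1}\}$. For $B\subset A$ with $\partial\mathbb E(B)\subset\mathbb E(B)$ it is an $M_{A,B}$-differential; $\partial_B$ denotes its restriction to $\mathbb E(B)$ and $\partial_{A\setminus B}$ the induced differential on $\mathbb E(A)/\mathbb E(B)$, identified with $\mathbb E(A\setminus B)$. An $M$-differential is elementary if every basis element maps to $0$ or to a single basis element and no two basis elements map to the same basis element. For $\partial$ with $\partial_B$, $\partial_{A\setminus B}$ elementary: $Q=\{b\in B:\partial_Bb\ne0\}$, $R=\partial_B(Q)$, $P=B\setminus(Q\cup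 R)$, $Y=\{a\in A\setminus B:\partial_{A\setminus B}a\ne0\}$, $Z=\partial_{A\setminus B}(Y)$, $X$ the rest of $A\setminus B$. A vector $v$ contains (or $a$ appears in $v$) $a\in A$ if $\langle v,a\rangle\ne0$. $\partial$ is quasi-elementary if $\partial_B,\partial_{A\setminus B}$ are elementary, each $\partial(x)$ for $x\in X$ contains at most one element of $P$, the corresponding coefficient is $1$, and each element of $P$ appears in at most one $\partial(x)$, $x\in X$. *)

theory Defs
  imports Main
begin

text \<open>Vectors of E(A) are coefficient functions 'a => 'k supported on A. A linear map
  on E(A) is given by its matrix: d a b = <d(a), b>, i.e. the coefficient of the basis
  element b in the image of the basis element a. The linear order on A is the order
  of the type 'a; the grading is deg.\<close>

definition delta :: "'a \<Rightarrow> 'a \<Rightarrow> 'k::zero_neq_one" where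
  "delta c = (\<lambda>b. if b = c then 1 else 0)"

definition M_diff :: "('a::linorder \<Rightarrow> int) \<Rightarrow> 'a set \<Rightarrow> ('a \<Rightarrow> 'a \<Rightarrow> 'k::field) \<Rightarrow> bool" where
  "M_diff deg A d \<longleftrightarrow> finite A
     \<and> (\<forall>a b. d a b \<noteq> 0 \<longrightarrow> a \<in> A \<and> b \<in> A \<and> b < a \<and> deg b = deg a - 1)
     \<and> (\<forall>a\<in>A. \<forall>c\<in>A. (\<Sum>b\<in>A. d a b * d b c) = 0)"

definition M_AB_diff :: "('a::linorder \<Rightarrow> int) \<Rightarrow> 'a set \<Rightarrow> 'a set \<Rightarrow> ('a \<Rightarrow> 'a \<Rightarrow> 'k::field) \<Rightarrow> bool" where
  "M_AB_diff deg A B d \<longleftrightarrow> M_diff deg A d \<and> B \<subseteq> A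
     \<and> (\<forall>b\<in>B. \<forall>a\<in>A - B. d b a = 0)"

text \<open>Restriction of the matrix to S: for S = B this is the restriction to E(B); for
  S = A - B it is the induced differential on E(A)/E(B), identified with E(A - B).\<close>
definition restr :: "'a set \<Rightarrow> ('a \<Rightarrow> 'a \<Rightarrow> 'k::zero) \<Rightarrow> 'a \<Rightarrow> 'a \<Rightarrow> 'k" where
  "restr S d = (\<lambda>a b. if a \<in> S \<and> b \<in> S then d a b else 0)"

definition elementary :: "'a set \<Rightarrow> ('a \<Rightarrow> 'a \<Rightarrow> 'k::field) \<Rightarrow> bool" where
  "elementary S e \<longleftrightarrow>
     (\<forall>a\<in>S. e a = (\<lambda>_. 0) \<or> (\<exists>c\<in>S. e a = delta c))
     \<and> (\<forall>a1\<in>S. \<forall>a2\<in>S. \<forall>c. e a1 = delta c \<and> e a2 = delta c \<longrightarrow> a1 = a2)"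

definition Qset :: "'a set \<Rightarrow> 'a set \<Rightarrow> ('a \<Rightarrow> 'a \<Rightarrow> 'k::field) \<Rightarrow> 'a set" where
  "Qset A B d = {b\<in>B. restr B d b \<noteq> (\<lambda>_. 0)}"
definition Rset :: "'a set \<Rightarrow> 'a set \<Rightarrow> ('a \<Rightarrow> 'a \<Rightarrow> 'k::field) \<Rightarrow> 'a set" where
  "Rset A B d = {c. \<exists>q\<in>Qset A B d. restr B d q = delta c}"
definition Pset :: "'a set \<Rightarrow> 'a set \<Rightarrow> ('a \<Rightarrow> 'a \<Rightarrow> 'k::field) \<Rightarrow> 'a set" where
  "Pset A B d = B - (Qset A B d \<union> Rset A B d)"
definition Yset :: "'a set \<Rightarrow> 'a set \<Rightarrow> ('a \<Rightarrow> 'a \<Rightarrow> 'k::field) \<Rightarrow> 'a set" where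
  "Yset A B d = {a\<in>A - B. restr (A - B) d a \<noteq> (\<lambda>_. 0)}"
definition Zset :: "'a set \<Rightarrow> 'a set \<Rightarrow> ('a \<Rightarrow> 'a \<Rightarrow> 'k::field) \<Rightarrow> 'a set" where
  "Zset A B d = {c. \<exists>y\<in>Yset A B d. restr (A - B) d y = delta c}"
definition Xset :: "'a set \<Rightarrow> 'a set \<Rightarrow> ('a \<Rightarrow> 'a \<Rightarrow> 'k::field) \<Rightarrow> 'a set" where
  "Xset A B d = (A - B) - (Yset A B d \<union> Zset A B d)"

definition quasi_elementary :: "'a set \<Rightarrow> 'a set \<Rightarrow> ('a \<Rightarrow> 'a \<Rightarrow> 'k::field) \<Rightarrow> bool" where
  "quasi_elementary A B d \<longleftrightarrow>
     elementary B (restr B d) \<and> elementary (A - B) (restr (A - B) d)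
     \<and> (\<forall>x\<in>Xset A B d. \<forall>p1\<in>Pset A B d. \<forall>p2\<in>Pset A B d.
           d x p1 \<noteq> 0 \<and> d x p2 \<noteq> 0 \<longrightarrow> p1 = p2)
     \<and> (\<forall>x\<in>Xset A B d. \<forall>p\<in>Pset A B d. d x p \<noteq> 0 \<longrightarrow> d x p = 1)
     \<and> (\<forall>p\<in>Pset A B d. \<forall>x1\<in>Xset A B d. \<forall>x2\<in>Xset A B d.
           d x1 p \<noteq> 0 \<and> d x2 p \<noteq> 0 \<longrightarrow> x1 = x2)"

end

theory Submission
  imports Defs
begin

lemma split_sum:
  fixes d :: "'a::linorder \<Rightarrow> 'a \<Rightarrow> 'k::field"
  assumes fin: "finite A" and BA: "B \<subseteq> A" and y: "y \<in> A - B"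
    and yz: "restr (A - B) d y = delta z"
  shows "z \<in> A - B \<and> (\<Sum>a\<in>A. d y a * d a c) = d z c + (\<Sum>a\<in>B. d y a * d a c)"
proof -
  have "restr (A - B) d y z = 1" using yz by (simp add: delta_def)
  hence z: "z \<in> A - B" unfolding restr_def by (auto split: if_splits)
  have e: "\<And>a. a \<in> A - B \<Longrightarrow> d y a = (if a = z then 1 else 0)"
  proof -
    fix a assume "a \<in> A - B"
    have "restr (A - B) d y a = delta z a" using yz by simp
    thus "d y a = (if a = z then 1 else 0)" using y \<open>a \<in> A - B\<close>
      by (simp add: restr_def delta_def)
  qed
  have "(\<Sum>a\<in>A. d y a * d a c) = (\<Sum>a\<in>A - B. d y a * d a c) + (\<Sum>a\<in>B. d y a * d a c)"
    using fin BA by (metis add.commute sum.subset_diff)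
  also have "(\<Sum>a\<in>A - B. d y a * d a c) = (\<Sum>a\<in>A - B. if a = z then d a c else 0)"
    by (rule sum.cong) (auto simp: e)
  also have "\<dots> = d z c" using z fin by (simp add: sum.delta)
  finally show ?thesis using z by simp
qed

theorem lemma4p1:
  fixes deg :: "'a::linorder \<Rightarrow> int" and A B :: "'a set" and d :: "'a \<Rightarrow> 'a \<Rightarrow> 'k::field"
  assumes "M_AB_diff deg A B d" and "quasi_elementary A B d"
  shows "(\<forall>q r y z. q \<in> Qset A B d \<and> r \<in> Rset A B d \<and> y \<in> Yset A B d \<and> z \<in> Zset A B d
            \<and> d q = delta r \<and> restr (A - B) d y = delta z
            \<longrightarrow> d y q = - d z r)
       \<and> (\<forall>y z b. y \<in> Yset A B d \<and> z \<in> Zset A B d \<and> restr (A - B) d y = delta z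
            \<and> b \<in> B \<and> d z b \<noteq> 0
            \<longrightarrow> b \<in> Rset A B d \<and> (\<exists>q\<in>Qset A B d. d q = delta b \<and> d y q \<noteq> 0))"
proof -
  have fin: "finite A" and BA: "B \<subseteq> A"
    and supp: "\<And>a b. d a b \<noteq> 0 \<Longrightarrow> a \<in> A \<and> b \<in> A"
    and sq: "\<And>a c. a \<in> A \<Longrightarrow> c \<in> A \<Longrightarrow> (\<Sum>b\<in>A. d a b * d b c) = 0"
    and cl: "\<And>b a. b \<in> B \<Longrightarrow> a \<in> A - B \<Longrightarrow> d b a = 0"
    using assms(1) unfolding M_AB_diff_def M_diff_def by auto
  have el: "elementary B (restr B d)" using assms(2) unfolding quasi_elementary_def by auto
  have el1: "\<And>a. a \<in> B \<Longrightarrow> restr B d a = (\<lambda>_. 0) \<or> (\<exists>c\<in>B. restr B d a = delta c)"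
    and el2: "\<And>a1 a2 c. a1 \<in> B \<Longrightarrow> a2 \<in> B \<Longrightarrow> restr B d a1 = delta c \<Longrightarrow> restr B d a2 = delta c \<Longrightarrow> a1 = a2"
    using el unfolding elementary_def by blast+
  have dB: "\<And>b. b \<in> B \<Longrightarrow> d b = restr B d b"
  proof
    fix b x assume b: "b \<in> B"
    show "d b x = restr B d b x"
    proof (cases "x \<in> B")
      case True thus ?thesis using b by (simp add: restr_def)
    next
      case False
      hence "d b x = 0" using cl[OF b] supp[of b x] by blast
      thus ?thesis using False by (simp add: restr_def)
    qed
  qed
  have key: "\<And>b' c. b' \<in> B \<Longrightarrow> d b' c \<noteq> 0 \<Longrightarrow> d b' = delta c \<and> b' \<in> Qset A B d"
  proof -
    fix b' c assume b': "b' \<in> B" and nz: "d b' c \<noteq> 0"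
    have nz2: "restr B d b' c \<noteq> 0" using dB[OF b'] nz by metis
    hence ne: "restr B d b' \<noteq> (\<lambda>_. 0)" by auto
    then obtain c' where "restr B d b' = delta c'" using el1[OF b'] by blast
    moreover have "c' = c" using nz2 calculation by (auto simp: delta_def split: if_splits)
    ultimately show "d b' = delta c \<and> b' \<in> Qset A B d"
      using dB[OF b'] ne b' by (auto simp: Qset_def)
  qed
  have part1: "\<forall>q r y z. q \<in> Qset A B d \<and> r \<in> Rset A B d \<and> y \<in> Yset A B d \<and> z \<in> Zset A B d
            \<and> d q = delta r \<and> restr (A - B) d y = delta z
            \<longrightarrow> d y q = - d z r"
  proof (intro allI impI)
    fix q r y z
    assume h: "q \<in> Qset A B d \<and> r \<in> Rset A B d \<and> y \<in> Yset A B d \<and> z \<in> Zset A B d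
            \<and> d q = delta r \<and> restr (A - B) d y = delta z"
    have q: "q \<in> B" using h by (simp add: Qset_def)
    have y: "y \<in> A - B" using h by (simp add: Yset_def)
    have "d q r = 1" using h by (simp add: delta_def)
    hence rA: "r \<in> A" using supp[of q r] by simp
    have yA: "y \<in> A" using y by simp
    have S: "(\<Sum>a\<in>A. d y a * d a r) = d z r + (\<Sum>a\<in>B. d y a * d a r)"
      using split_sum[OF fin BA y] h by blast
    have "(\<Sum>a\<in>B. d y a * d a r) = (\<Sum>a\<in>B. if a = q then d y a else 0)"
    proof (rule sum.cong)
      fix a assume a: "a \<in> B"
      show "d y a * d a r = (if a = q then d y a else 0)"
      proof (cases "d a r = 0")
        case True
        moreover have "a \<noteq> q" using True \<open>d q r = 1\<close> by auto
        ultimately show ?thesis by simp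
      next
        case False
        have "d a = delta r" using key[OF a False] by blast
        hence "a = q" using el2[OF a q] dB[OF a] dB[OF q] h by metis
        thus ?thesis using \<open>d q r = 1\<close> by simp
      qed
    qed simp
    also have "\<dots> = d y q" using q BA fin by (simp add: sum.delta finite_subset)
    finally show "d y q = - d z r" using S sq[OF yA rA]
      by (simp add: eq_neg_iff_add_eq_0 add.commute)
  qed
  have part2: "\<forall>y z b. y \<in> Yset A B d \<and> z \<in> Zset A B d \<and> restr (A - B) d y = delta z
            \<and> b \<in> B \<and> d z b \<noteq> 0
            \<longrightarrow> b \<in> Rset A B d \<and> (\<exists>q\<in>Qset A B d. d q = delta b \<and> d y q \<noteq> 0)"
  proof (intro allI impI)
    fix y z b
    assume h: "y \<in> Yset A B d \<and> z \<in> Zset A B d \<and> restr (A - B) d y = delta z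
            \<and> b \<in> B \<and> d z b \<noteq> 0"
    have y: "y \<in> A - B" using h by (simp add: Yset_def)
    have b: "b \<in> B" using h by simp
    have S: "(\<Sum>a\<in>A. d y a * d a b) = d z b + (\<Sum>a\<in>B. d y a * d a b)"
      using split_sum[OF fin BA y] h by blast
    hence "(\<Sum>a\<in>B. d y a * d a b) \<noteq> 0" using sq[of y b] y b BA h by auto
    then obtain q where q: "q \<in> B" and nz: "d y q * d q b \<noteq> 0"
      by (meson sum.neutral)
    have "d q b \<noteq> 0" "d y q \<noteq> 0" using nz by auto
    from key[OF q this(1)] have kq: "d q = delta b" "q \<in> Qset A B d" by auto
    have "restr B d q = delta b" using kq dB[OF q] by simp
    hence "b \<in> Rset A B d" using kq unfolding Rset_def by blast
    thus "b \<in> Rset A B d \<and> (\<exists>q\<in>Qset A B d. d q = delta b \<and> d y q \<noteq> 0)"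
      using kq \<open>d y q \<noteq> 0\<close> by blast
  qed
  show ?thesis using part1 part2 by blast
qed

end
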